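(* Let $k\ge 1$ and $n$ be positive integers with $n>3k+\sqrt{2k^{2}-k}$. Then for every $k$-regular graph $G$ with $n$ vertices, the complement $\overline{G}$ is not Helly.
   Context: All graphs are finite and simple. A clique is a maximal set of pairwise adjacent vertices. A collection of sets is intersecting if any two members have nonempty intersection, and has the Helly property if every intersecting subcollection has nonempty total intersection. A graph is Helly if its collection of cliques has the Helly property. *)

theory Defs
  imports Complex_Main
begin

definition simple_graph :: "'a set \<Rightarrow> ('a \<Rightarrow> 'a \<Rightarrow> bool) \<Rightarrow> bool" where
  "simple_graph V E \<longleftrightarrow> finite V \<and> (\<forall>x y. E x y \<longrightarrow> x \<in> V \<and> y \<in> V) \<and>
     (\<forall>x y. E x y \<longrightarrow> E y x) \<and> (\<forall>x. \<not> E x x)"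

definition degree :: "'a set \<Rightarrow> ('a \<Rightarrow> 'a \<Rightarrow> bool) \<Rightarrow> 'a \<Rightarrow> nat" where
  "degree V E v = card {u \<in> V. E v u}"

definition regular :: "'a set \<Rightarrow> ('a \<Rightarrow> 'a \<Rightarrow> bool) \<Rightarrow> nat \<Rightarrow> bool" where
  "regular V E k \<longleftrightarrow> (\<forall>v \<in> V. degree V E v = k)"

definition complement :: "'a set \<Rightarrow> ('a \<Rightarrow> 'a \<Rightarrow> bool) \<Rightarrow> ('a \<Rightarrow> 'a \<Rightarrow> bool)" where
  "complement V E = (\<lambda>x y. x \<in> V \<and> y \<in> V \<and> x \<noteq> y \<and> \<not> E x y)"

definition complete_set :: "'a set \<Rightarrow> ('a \<Rightarrow> 'a \<Rightarrow> bool) \<Rightarrow> 'a set \<Rightarrow> bool" where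
  "complete_set V E C \<longleftrightarrow> C \<subseteq> V \<and> (\<forall>x\<in>C. \<forall>y\<in>C. x \<noteq> y \<longrightarrow> E x y)"

definition is_clique :: "'a set \<Rightarrow> ('a \<Rightarrow> 'a \<Rightarrow> bool) \<Rightarrow> 'a set \<Rightarrow> bool" where
  "is_clique V E C \<longleftrightarrow> complete_set V E C \<and>
     (\<forall>D. complete_set V E D \<and> C \<subseteq> D \<longrightarrow> D = C)"

definition cliques :: "'a set \<Rightarrow> ('a \<Rightarrow> 'a \<Rightarrow> bool) \<Rightarrow> 'a set set" where
  "cliques V E = {C. is_clique V E C}"

definition intersecting :: "'a set set \<Rightarrow> bool" where
  "intersecting \<F> \<longleftrightarrow> (\<forall>A\<in>\<F>. \<forall>B\<in>\<F>. A \<inter> B \<noteq> {})"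

definition helly_property :: "'a set set \<Rightarrow> bool" where
  "helly_property \<F> \<longleftrightarrow> (\<forall>\<G> \<subseteq> \<F>. intersecting \<G> \<longrightarrow> \<Inter>\<G> \<noteq> {})"

definition helly_graph :: "'a set \<Rightarrow> ('a \<Rightarrow> 'a \<Rightarrow> bool) \<Rightarrow> bool" where
  "helly_graph V E \<longleftrightarrow> helly_property (cliques V E)"

end

theory Submission
  imports Defs
begin

lemma arith1:
  fixes k m p :: real
  assumes k: "k \<ge> 1" and m: "m > 0" and p: "p \<ge> 0"
    and h1: "p*(m+3*k-1) \<le> k*(k-1)" and h2: "(m+k)^2 > 2*k^2-k"
  shows "p*(m+p) < k*m"
proof (cases "k = 1")
  case True
  then have "p*(m+2) \<le> 0" using h1 by (simp add: add.commute)
  then have "p = 0" using p m by (smt (verit) mult_pos_pos)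
  then show ?thesis using True m by simp
next
  case False
  then have k1: "k > 1" using k by simp
  define D where "D = m+3*k-1"
  have D: "D > 0" using m k by (simp add: D_def)
  have pD: "p*D \<le> k*(k-1)" using h1 D_def by simp
  have "(p*D)*(m*D + p*D) \<le> (k*(k-1))*(m*D + k*(k-1))"
    apply (rule mult_mono) using pD p D m k by auto
  also have "\<dots> < (k*(k-1))*(m*D + m^2 + 2*m*k)"
    apply (rule mult_strict_left_mono) using h2 k1 by (auto simp: power2_eq_square algebra_simps)
  also have "\<dots> = k*m*((k-1)*(D+m+2*k))" by (simp add: algebra_simps power2_eq_square)
  also have "\<dots> \<le> k*m*(D*D)"
    apply (rule mult_left_mono) using k m unfolding D_def by (auto simp: algebra_simps power2_eq_square)
  finally have "(p*(m+p))*(D*D) < (k*m)*(D*D)" by (simp add: algebra_simps)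
  then show ?thesis using D by (smt (verit) mult_right_mono zero_less_mult_iff)
qed

lemma arith2:
  fixes n k p q U :: real
  assumes k: "k \<ge> 1" and p: "p \<ge> 0" and q: "q \<ge> 0" and n: "n > 4*k"
    and h2: "(n-3*k)^2 > 2*k^2-k" and h1: "p*(n-1-k) \<le> k*(k-1)"
    and h3: "q*(n-2-U) + 2*k \<le> k*U" and hU: "U + p = 2*k" and hW: "n-2-U \<ge> 0"
  shows "p + q < k"
proof (rule ccontr)
  assume "\<not> ?thesis"
  then have qq: "q \<ge> k - p" by simp
  define m where "m = n - 4*k"
  have m: "m > 0" using n m_def by simp
  have a1: "p*(m+p) < k*m"
    apply (rule arith1[OF k m p])
    using h1 h2 unfolding m_def by (auto simp: algebra_simps)
  show False
  proof (cases "p \<ge> k")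
    case True
    have "k*(n-1-k) \<le> p*(n-1-k)" apply (rule mult_right_mono) using True n k by auto
    then have "k*(n-1-k) \<le> k*(k-1)" using h1 by simp
    then have "n-1-k \<le> k-1" using k mult_le_cancel_left_pos[of k "n-1-k" "k-1"] by simp
    then show False using n k by simp
  next
    case False
    have "(k-p)*(n-2-U) \<le> q*(n-2-U)" apply (rule mult_right_mono) using qq hW by auto
    then have "(k-p)*(n-2-U) + 2*k \<le> k*U" using h3 by simp
    then have "(k-p)*(n-2-(2*k-p)) + 2*k \<le> k*(2*k-p)" using hU by (smt (verit))
    then have "k*m - p*m - p*p + 2*p \<le> 0" unfolding m_def by (simp add: algebra_simps)
    then show False using a1 p by (simp add: algebra_simps)
  qed
qed


lemma swap_count:
  assumes "finite X" "finite Y"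
  shows "(\<Sum>y\<in>Y. card {x\<in>X. R x y}) = (\<Sum>x\<in>X. card {y\<in>Y. R x y})"
proof -
  have "(\<Sum>y\<in>Y. card {x\<in>X. R x y}) = (\<Sum>y\<in>Y. \<Sum>x\<in>X. if R x y then 1 else 0)"
    using assms by (simp add: sum.inter_filter[symmetric])
  also have "\<dots> = (\<Sum>x\<in>X. \<Sum>y\<in>Y. if R x y then 1 else 0)" by (rule sum.swap)
  also have "\<dots> = (\<Sum>x\<in>X. card {y\<in>Y. R x y})"
    using assms by (simp add: sum.inter_filter[symmetric])
  finally show ?thesis .
qed

lemma avg_exists:
  fixes f :: "'b \<Rightarrow> nat"
  assumes "finite W" "W \<noteq> {}" "(\<Sum>c\<in>W. f c) \<le> M"
  shows "\<exists>c\<in>W. f c * card W \<le> M"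
proof (rule ccontr)
  assume "\<not> ?thesis"
  then have h: "\<And>c. c \<in> W \<Longrightarrow> M < f c * card W" by force
  have "(\<Sum>c\<in>W. M) < (\<Sum>c\<in>W. f c * card W)"
    using assms(1,2) h by (intro sum_strict_mono) auto
  also have "\<dots> = (\<Sum>c\<in>W. f c) * card W" by (simp add: sum_distrib_right)
  also have "\<dots> \<le> M * card W" using assms(3) by simp
  finally show False by (simp add: mult.commute)
qed

lemma ext_clique:
  assumes "finite V" "complete_set V H D"
  shows "\<exists>C. is_clique V H C \<and> D \<subseteq> C"
proof -
  let ?F = "{C. complete_set V H C \<and> D \<subseteq> C}"
  have "?F \<subseteq> Pow V" by (auto simp: complete_set_def)
  then have "finite ?F" using assms(1) by (meson finite_Pow_iff rev_finite_subset)
  moreover have "?F \<noteq> {}" using assms(2) by auto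
  ultimately obtain C where C: "C \<in> ?F" "\<forall>b\<in>?F. C \<subseteq> b \<longrightarrow> C = b"
    using finite_has_maximal[of ?F] by metis
  then have "is_clique V H C" unfolding is_clique_def by auto
  then show ?thesis using C by auto
qed

lemma no_common:
  assumes sg: "simple_graph V E" and fin: "finite V"
    and y: "y \<in> V" and z: "z \<in> V" and yz: "y \<noteq> z" "\<not> E y z"
    and x: "x \<in> V" and xy: "\<not> E x y" and xz: "\<not> E x z"
    and u: "\<And>C. is_clique V (complement V E) C \<Longrightarrow> y \<in> C \<Longrightarrow> z \<in> C \<Longrightarrow> u \<in> C"
    and ux: "E u x"
  shows False
proof -
  have sym: "\<And>s t. E s t \<Longrightarrow> E t s" and irr: "\<And>s. \<not> E s s"
    using sg unfolding simple_graph_def by blast+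
  have "complete_set V (complement V E) {x,y,z}"
    unfolding complete_set_def complement_def using x y z yz xy xz sym by blast
  then obtain C where C: "is_clique V (complement V E) C" "{x,y,z} \<subseteq> C"
    using ext_clique[OF fin] by blast
  have "u \<in> C" using u C by auto
  moreover have "u \<noteq> x" using ux irr by auto
  ultimately have "complement V E u x" using C unfolding is_clique_def complete_set_def by auto
  then show False using ux unfolding complement_def by auto
qed

theorem mainTheorem6:
  fixes V :: "'a set" and E :: "'a \<Rightarrow> 'a \<Rightarrow> bool" and k n :: nat
  assumes "k \<ge> 1" and "n \<ge> 1"
    and "real n > 3 * real k + sqrt (2 * (real k)\<^sup>2 - real k)"
    and "simple_graph V E" and "card V = n" and "regular V E k"
  shows "\<not> helly_graph V (complement V E)"
proof -
  have fin: "finite V" and inV: "\<And>s t. E s t \<Longrightarrow> s \<in> V \<and> t \<in> V"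
    and sym: "\<And>s t. E s t \<Longrightarrow> E t s" and irr: "\<And>s. \<not> E s s"
    using assms(4) unfolding simple_graph_def by blast+
  have deg: "\<And>v. v \<in> V \<Longrightarrow> card {u\<in>V. E v u} = k"
    using assms(6) unfolding regular_def degree_def by blast
  have kk: "2 * (real k)\<^sup>2 - real k \<ge> 0" using assms(1) by (simp add: power2_eq_square)
  have "real k \<le> sqrt (2 * (real k)\<^sup>2 - real k)"
    apply (rule real_le_rsqrt) using assms(1) by (simp add: power2_eq_square)
  then have n4: "real n > 4 * real k" using assms(3) by simp
  have sq: "(real n - 3 * real k)^2 > 2 * (real k)\<^sup>2 - real k"
  proof -
    have "sqrt (2 * (real k)\<^sup>2 - real k) < real n - 3 * real k" using assms(3) by simp
    then have "(sqrt (2 * (real k)\<^sup>2 - real k))^2 < (real n - 3 * real k)^2"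
      by (intro power_strict_mono) (use kk in auto)
    then show ?thesis using kk by simp
  qed
  have n4': "n > 4*k" using n4 by linarith
  obtain a where a: "a \<in> V" using assms(2,5) by fastforce
  define A where "A = {u\<in>V. E a u}"
  have cA: "card A = k" using deg a A_def by simp
  define Z where "Z = {b\<in>V. b \<noteq> a \<and> \<not> E a b}"
  have "V = insert a (A \<union> Z)" using a unfolding A_def Z_def by auto
  moreover have "a \<notin> A \<union> Z" "A \<inter> Z = {}" unfolding A_def Z_def using irr by auto
  moreover have "finite A" "finite Z" using fin unfolding A_def Z_def by auto
  ultimately have "card V = Suc (card A + card Z)"
    by (metis card_Un_disjoint card_insert_disjoint finite_UnI)
  then have cZ: "card Z + k + 1 = n" using assms(5) cA by simp
  have "(\<Sum>x\<in>A. card {b\<in>Z. E b x}) = (\<Sum>b\<in>Z. card {x\<in>A. E b x})"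
    by (rule swap_count) (use fin in \<open>auto simp: A_def Z_def\<close>)
  moreover have "(\<Sum>x\<in>A. card {b\<in>Z. E b x}) \<le> (\<Sum>x\<in>A. k - 1)"
  proof (rule sum_mono)
    fix x assume x: "x \<in> A"
    then have xV: "x \<in> V" and ax: "E x a" using sym unfolding A_def by auto
    have "{b\<in>Z. E b x} \<subseteq> {u\<in>V. E x u} - {a}" using sym unfolding Z_def by auto
    then have "card {b\<in>Z. E b x} \<le> card ({u\<in>V. E x u} - {a})"
      by (intro card_mono) (use fin in auto)
    also have "\<dots> = k - 1" using deg[OF xV] ax a fin by (simp add: card_Diff_singleton)
    finally show "card {b\<in>Z. E b x} \<le> k - 1" .
  qed
  ultimately have sumZ: "(\<Sum>b\<in>Z. card {x\<in>A. E b x}) \<le> k * (k-1)" using cA by simp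
  have "Z \<noteq> {}" using cZ n4' assms(1) by auto
  then obtain b where b: "b \<in> Z" and bp: "card {x\<in>A. E b x} * card Z \<le> k*(k-1)"
    using avg_exists[OF _ _ sumZ] fin Z_def by auto
  have bV: "b \<in> V" and ab: "a \<noteq> b" "\<not> E a b" using b Z_def by auto
  define B where "B = {u\<in>V. E b u}"
  have cB: "card B = k" using deg bV B_def by simp
  have PAB: "{x\<in>A. E b x} = A \<inter> B" unfolding A_def B_def by auto
  define p where "p = card (A \<inter> B)"
  define U where "U = card (A \<union> B)"
  have finA: "finite A" and finB: "finite B" using fin A_def B_def by auto
  have UP: "U + p = 2*k" unfolding U_def p_def using card_Un_Int[OF finA finB] cA cB by simp
  define W where "W = V - (A \<union> B) - {a,b}"
  have ABV: "A \<union> B \<subseteq> V" unfolding A_def B_def by auto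
  have abAB: "a \<notin> A \<union> B" "b \<notin> A \<union> B" unfolding A_def B_def using irr ab sym by auto
  have "card W = card (V - (A \<union> B)) - card {a,b}"
    unfolding W_def apply (rule card_Diff_subset) using a bV abAB by auto
  moreover have "card (V - (A \<union> B)) = n - U"
    using card_Diff_subset[OF _ ABV] fin assms(5) U_def by (metis finite_subset ABV)
  ultimately have cW: "card W = n - U - 2" using ab by simp
  have finW: "finite W" using fin W_def by auto
  have finAB: "finite (A \<union> B)" using finA finB by simp
  have s1: "(\<Sum>x\<in>A \<union> B. card {c\<in>W. E c x}) = (\<Sum>c\<in>W. card {x\<in>A \<union> B. E c x})"
    by (rule swap_count[OF finW finAB])
  have s2: "(\<Sum>x\<in>A \<union> B. card {y\<in>{a,b}. E x y}) = (\<Sum>y\<in>{a,b}. card {x\<in>A \<union> B. E x y})"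
    using swap_count[OF finAB, of "{a,b}" "\<lambda>x y. E x y"] by simp
  have "{x\<in>A \<union> B. E x a} = A" "{x\<in>A \<union> B. E x b} = B"
    unfolding A_def B_def using sym by auto
  then have s3: "(\<Sum>x\<in>A \<union> B. card {y\<in>{a,b}. E x y}) = 2*k" using s2 ab cA cB by simp
  have s4: "(\<Sum>x\<in>A \<union> B. card {c\<in>W. E c x} + card {y\<in>{a,b}. E x y}) \<le> (\<Sum>x\<in>A \<union> B. k)"
  proof (rule sum_mono)
    fix x assume x: "x \<in> A \<union> B"
    then have xV: "x \<in> V" using ABV by auto
    have d: "{c\<in>W. E c x} \<inter> {y\<in>{a,b}. E x y} = {}" unfolding W_def by auto
    have "card {c\<in>W. E c x} + card {y\<in>{a,b}. E x y} = card ({c\<in>W. E c x} \<union> {y\<in>{a,b}. E x y})"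
      by (rule card_Un_disjoint[symmetric]) (use finW d in auto)
    also have "\<dots> \<le> card {u\<in>V. E x u}"
      apply (rule card_mono) using fin a bV sym W_def by auto
    finally show "card {c\<in>W. E c x} + card {y\<in>{a,b}. E x y} \<le> k" using deg[OF xV] by simp
  qed
  have sumW0: "(\<Sum>c\<in>W. card {x\<in>A \<union> B. E c x}) + 2*k \<le> k*U"
    using s4 s3 s1 unfolding sum.distrib U_def by (simp add: mult.commute)
  then have kU: "2*k \<le> k*U" by linarith
  have sumW: "(\<Sum>c\<in>W. card {x\<in>A \<union> B. E c x}) \<le> k*U - 2*k" using sumW0 by simp
  have "W \<noteq> {}" using cW UP n4' assms(1) by auto
  then obtain c where c: "c \<in> W" and cq: "card {x\<in>A \<union> B. E c x} * card W \<le> k*U - 2*k"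
    using avg_exists[OF finW _ sumW] by auto
  define q where "q = card {x\<in>A \<union> B. E c x}"
  have cV: "c \<in> V" and ac: "a \<noteq> c" "\<not> E a c" and bc: "b \<noteq> c" "\<not> E b c"
    using c unfolding W_def A_def B_def by auto
  define S where "S = {x\<in>V. (E x a \<and> E x b) \<or> (E x a \<and> E x c) \<or> (E x b \<and> E x c)}"
  have "S \<subseteq> (A \<inter> B) \<union> {x\<in>A \<union> B. E c x}" unfolding S_def A_def B_def using sym by auto
  then have "card S \<le> card ((A \<inter> B) \<union> {x\<in>A \<union> B. E c x})" by (intro card_mono) (use finAB in auto)
  also have "\<dots> \<le> p + q" unfolding p_def q_def by (rule card_Un_le)
  finally have cS: "card S \<le> p + q" .
  have "real p + real q < real k"
  proof (rule arith2[where n="real n" and U="real U"])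
    show "1 \<le> real k" using assms(1) by simp
    show "0 \<le> real p" "0 \<le> real q" by auto
    show "4 * real k < real n" by (rule n4)
    show "2 * (real k)\<^sup>2 - real k < (real n - 3 * real k)\<^sup>2" by (rule sq)
    have "p * card Z \<le> k*(k-1)" using bp PAB p_def by simp
    then have "real p * real (card Z) \<le> real k * (real k - 1)"
      using assms(1) by (metis of_nat_diff of_nat_le_iff of_nat_mult of_nat_1)
    moreover have "real (card Z) = real n - 1 - real k" using cZ by linarith
    ultimately show "real p * (real n - 1 - real k) \<le> real k * (real k - 1)" by simp
    have "q * card W + 2*k \<le> k*U" using cq kU unfolding q_def by linarith
    then have "real q * real (card W) + 2 * real k \<le> real k * real U"
      by (metis of_nat_add of_nat_le_iff of_nat_mult of_nat_numeral)
    moreover have "real (card W) = real n - 2 - real U"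
    proof -
      have h: "card W + U + 2 = n" using cW UP n4' assms(1) by arith
      show ?thesis using h[symmetric] by simp
    qed
    ultimately show "real q * (real n - 2 - real U) + 2 * real k \<le> real k * real U" by simp
    show "real U + real p = 2 * real k" using UP by linarith
    show "0 \<le> real n - 2 - real U" using UP n4' assms(1) by linarith
  qed
  then have Sk: "card S < k" using cS by linarith
  define G where "G = {C. is_clique V (complement V E) C \<and>
      ((a \<in> C \<and> b \<in> C) \<or> (a \<in> C \<and> c \<in> C) \<or> (b \<in> C \<and> c \<in> C))}"
  have Gsub: "G \<subseteq> cliques V (complement V E)" unfolding G_def cliques_def by auto
  have Gint: "intersecting G" unfolding intersecting_def G_def by blast
  have "\<Inter>G = {}"
  proof (rule ccontr)
    assume "\<Inter>G \<noteq> {}"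
    then obtain u where u: "u \<in> \<Inter>G" by blast
    have uC: "\<And>C y z. is_clique V (complement V E) C \<Longrightarrow> y \<in> {a,b,c} \<Longrightarrow> z \<in> {a,b,c} \<Longrightarrow> y \<noteq> z
       \<Longrightarrow> y \<in> C \<Longrightarrow> z \<in> C \<Longrightarrow> u \<in> C"
      using u unfolding G_def by blast
    have "complete_set V (complement V E) {a,b,c}"
      unfolding complete_set_def complement_def using a bV cV ab ac bc sym by blast
    then obtain C0 where C0: "is_clique V (complement V E) C0" "{a,b,c} \<subseteq> C0"
      using ext_clique[OF fin] by blast
    have "u \<in> C0" using uC[OF C0(1), of a b] C0 ab by auto
    then have uV: "u \<in> V" using C0 unfolding is_clique_def complete_set_def by auto
    have "{x\<in>V. E u x} \<subseteq> S"
    proof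
      fix x assume x: "x \<in> {x\<in>V. E u x}"
      then have xV: "x \<in> V" and ux: "E u x" by auto
      show "x \<in> S"
      proof (rule ccontr)
        assume "x \<notin> S"
        then have "(\<not> E x a \<and> \<not> E x b) \<or> (\<not> E x a \<and> \<not> E x c) \<or> (\<not> E x b \<and> \<not> E x c)"
          unfolding S_def using xV by auto
        then show False
        proof (elim disjE)
          assume h: "\<not> E x a \<and> \<not> E x b"
          show False apply (rule no_common[OF assms(4) fin a bV ab xV _ _ _ ux])
            using h ab uC[of _ a b] by auto
        next
          assume h: "\<not> E x a \<and> \<not> E x c"
          show False apply (rule no_common[OF assms(4) fin a cV ac xV _ _ _ ux])
            using h ac uC[of _ a c] by auto
        next
          assume h: "\<not> E x b \<and> \<not> E x c"
          show False apply (rule no_common[OF assms(4) fin bV cV bc xV _ _ _ ux])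
            using h bc uC[of _ b c] by auto
        qed
      qed
    qed
    then have "card {x\<in>V. E u x} \<le> card S" by (intro card_mono) (use fin S_def in auto)
    then show False using deg[OF uV] Sk by simp
  qed
  then show ?thesis unfolding helly_graph_def helly_property_def using Gsub Gint by blast
qed

end
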